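(* Let $\mathfrak{X}$ be a Bourgain–Delbaen space determined by $(\Gamma_q,i_q)_q$, let $\Gamma'$ be an infinite subset of $\Gamma$, for all $q$ set $\Gamma_q'=\Gamma'\cap\Gamma_q$, $\Delta_q'=\Gamma'\cap\Delta_q$, and let $q_0=\min\{q:\Gamma_q'\neq\varnothing\}$. The following are equivalent: (a) $\Gamma'$ is self-determined; (b) for all $q\geqslant q_0$, $\langle\{d_\gamma^*:\gamma\in\Gamma_q'\}\rangle=\langle\{e_\gamma^*:\gamma\in\Gamma_q'\}\rangle$; (c) $\langle\{d_\gamma^*:\gamma\in\Gamma_{q_0}'\}\rangle=\langle\{e_\gamma^*:\gamma\in\Gamma_{q_0}'\}\rangle$ and for all $q\geqslant q_0$, $\langle\{c_\gamma^*:\gamma\in\Delta_{q+1}'\}\rangle\subset\langle\{e_\gamma^*\circ P_E:\gamma\in\Gamma_q',\ E\text{ an interval of }\mathbb{N}\}\rangle$; (d) for all $\gamma\in\Gamma\setminus\Gamma'$ and $\eta\in\Gamma'$, $e_\eta^*(d_\gamma)=0$; (e) for all $\gamma\in\Gamma\setminus\Gamma'$ and $\eta\in\Gamma'$, $c_\eta^*(d_\gamma)=0$.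
   Context: Bourgain–Delbaen spaces: $(\Gamma_q)_{q\geqslant1}$ is a strictly increasing sequence of non-empty finite sets, $\Gamma=\bigcup_q\Gamma_q$, and $i_q:\ell_\infty(\Gamma_q)\to\ell_\infty(\Gamma)$ are linear extension operators (i.e. $i_q(x)|_{\Gamma_q}=x$) with $C=\sup_q\|i_q\|<\infty$, which are compatible: for $p<q$, $i_p=i_q\circ r_q\circ i_p$, where $r_q:\ell_\infty(\Gamma)\to\ell_\infty(\Gamma_q)$ is restriction. Set $\Delta_1=\Gamma_1$, $\Delta_{q+1}=\Gamma_{q+1}\setminus\Gamma_q$, and for $\gamma\in\Delta_q$ let $d_\gamma=i_q(e_\gamma)$. The space $\mathfrak{X}$ is the closed linear span of $\{d_\gamma:\gamma\in\Gamma\}$ in $\ell_\infty(\Gamma)$. With $M_q=\langle\{d_\gamma:\gamma\in\Delta_q\}\rangle$, $(M_q)_q$ is an FDD of $\mathfrak{X}$ and $P_E$ denotes the associated projection onto $\bigoplus_{q\in E}M_q$ for an interval $E\subset\mathbb{N}$. For $\gamma\in\Gamma$, $e_\gamma^*$ is the evaluation at coordinate $\gamma$ restricted to $\mathfrak{X}$, $(d_\gamma^* )_{\gamma\in\Gamma}$ are the functionals biorthogonal to the basis $(d_\gamma)_\gamma$ (for $\gamma\in\Delta_q$, $d_\gamma^*=e_\gamma^*\circ P_{\{q\}}$), and $c_\gamma^*=e_\gamma^*-d_\gamma^*$. An infinite subset $\Gamma'\subseteq\Gamma$ is self-determined if for every $\gamma\in\Gamma'$ the functional $d_\gamma^*$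 lies in the linear span of $\{e_\eta^*:\eta\in\Gamma'\}$. $\langle\cdot\rangle$ denotes linear span. *)

theory Defs
  imports Complex_Main
begin

text \<open>Elements of l_infinity(Gamma) and l_infinity(Gamma_q) are modelled as functions
  'g => real vanishing outside Gamma (resp. Gamma_q).\<close>

definition supp_in :: "'g set \<Rightarrow> ('g \<Rightarrow> real) \<Rightarrow> bool" where
  "supp_in A x \<longleftrightarrow> (\<forall>\<gamma>. \<gamma> \<notin> A \<longrightarrow> x \<gamma> = 0)"

definition restr :: "'g set \<Rightarrow> ('g \<Rightarrow> real) \<Rightarrow> ('g \<Rightarrow> real)" where
  "restr A x = (\<lambda>\<gamma>. if \<gamma> \<in> A then x \<gamma> else 0)"

definition unit_vec :: "'g \<Rightarrow> 'g \<Rightarrow> real" where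
  "unit_vec \<gamma> = (\<lambda>\<eta>. if \<eta> = \<gamma> then 1 else 0)"

definition BD_Gamma :: "(nat \<Rightarrow> 'g set) \<Rightarrow> 'g set" where
  "BD_Gamma Gamma = (\<Union>q\<in>{1..}. Gamma q)"

definition BD_system :: "(nat \<Rightarrow> 'g set) \<Rightarrow> (nat \<Rightarrow> ('g \<Rightarrow> real) \<Rightarrow> ('g \<Rightarrow> real)) \<Rightarrow> bool" where
  "BD_system Gamma i \<longleftrightarrow>
     (\<forall>q\<ge>1. finite (Gamma q) \<and> Gamma q \<noteq> {} \<and> Gamma q \<subset> Gamma (Suc q)) \<and>
     (\<forall>q\<ge>1. \<forall>x y a b. supp_in (Gamma q) x \<longrightarrow> supp_in (Gamma q) y \<longrightarrow>
        i q (\<lambda>\<gamma>. a * x \<gamma> + b * y \<gamma>) = (\<lambda>\<gamma>. a * i q x \<gamma> + b * i q y \<gamma>)) \<and>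
     (\<forall>q\<ge>1. \<forall>x. supp_in (Gamma q) x \<longrightarrow>
        supp_in (BD_Gamma Gamma) (i q x) \<and> (\<forall>\<gamma>\<in>Gamma q. i q x \<gamma> = x \<gamma>)) \<and>
     (\<exists>C. \<forall>q\<ge>1. \<forall>x M. supp_in (Gamma q) x \<longrightarrow> (\<forall>\<gamma>. \<bar>x \<gamma>\<bar> \<le> M) \<longrightarrow>
        (\<forall>\<gamma>. \<bar>i q x \<gamma>\<bar> \<le> C * M)) \<and>
     (\<forall>p q x. 1 \<le> p \<longrightarrow> p < q \<longrightarrow> supp_in (Gamma p) x \<longrightarrow>
        i p x = i q (restr (Gamma q) (i p x)))"

definition level :: "(nat \<Rightarrow> 'g set) \<Rightarrow> 'g \<Rightarrow> nat" where
  "level Gamma \<gamma> = (LEAST q. 1 \<le> q \<and> \<gamma> \<in> Gamma q)"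

definition Delta :: "(nat \<Rightarrow> 'g set) \<Rightarrow> nat \<Rightarrow> 'g set" where
  "Delta Gamma q = (if q = 0 then {} else if q = 1 then Gamma 1 else Gamma q - Gamma (q - 1))"

definition dvec :: "(nat \<Rightarrow> 'g set) \<Rightarrow> (nat \<Rightarrow> ('g \<Rightarrow> real) \<Rightarrow> ('g \<Rightarrow> real)) \<Rightarrow> 'g \<Rightarrow> 'g \<Rightarrow> real" where
  "dvec Gamma i \<gamma> = i (level Gamma \<gamma>) (unit_vec \<gamma>)"

text \<open>The space X: closure (in the sup norm) of the linear span of the d_gamma.\<close>
definition BD_X :: "(nat \<Rightarrow> 'g set) \<Rightarrow> (nat \<Rightarrow> ('g \<Rightarrow> real) \<Rightarrow> ('g \<Rightarrow> real)) \<Rightarrow> ('g \<Rightarrow> real) set" where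
  "BD_X Gamma i = {x. \<forall>\<epsilon>>0. \<exists>S c. finite S \<and> S \<subseteq> BD_Gamma Gamma \<and>
      (\<forall>\<eta>. \<bar>x \<eta> - (\<Sum>\<gamma>\<in>S. c \<gamma> * dvec Gamma i \<gamma> \<eta>)\<bar> \<le> \<epsilon>)}"

text \<open>FDD projections: P_{[1,q]} = i_q o r_q on X (P_{[1,0]} = 0).\<close>
definition Pinit :: "(nat \<Rightarrow> 'g set) \<Rightarrow> (nat \<Rightarrow> ('g \<Rightarrow> real) \<Rightarrow> ('g \<Rightarrow> real)) \<Rightarrow> nat \<Rightarrow> ('g \<Rightarrow> real) \<Rightarrow> ('g \<Rightarrow> real)" where
  "Pinit Gamma i q x = (if q = 0 then (\<lambda>_. 0) else i q (restr (Gamma q) x))"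

definition Pint :: "(nat \<Rightarrow> 'g set) \<Rightarrow> (nat \<Rightarrow> ('g \<Rightarrow> real) \<Rightarrow> ('g \<Rightarrow> real)) \<Rightarrow> nat set \<Rightarrow> ('g \<Rightarrow> real) \<Rightarrow> ('g \<Rightarrow> real)" where
  "Pint Gamma i E x = (if finite E
      then (\<lambda>\<eta>. \<Sum>q\<in>E. Pinit Gamma i q x \<eta> - Pinit Gamma i (q - 1) x \<eta>)
      else (\<lambda>\<eta>. x \<eta> - Pinit Gamma i (Inf E - 1) x \<eta>))"

definition nat_interval :: "nat set \<Rightarrow> bool" where
  "nat_interval E \<longleftrightarrow> 0 \<notin> E \<and> (\<forall>a\<in>E. \<forall>c\<in>E. \<forall>b. a \<le> b \<longrightarrow> b \<le> c \<longrightarrow> b \<in> E)"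

definition ecoord :: "'g \<Rightarrow> ('g \<Rightarrow> real) \<Rightarrow> real" where
  "ecoord \<gamma> = (\<lambda>x. x \<gamma>)"

definition dstar :: "(nat \<Rightarrow> 'g set) \<Rightarrow> (nat \<Rightarrow> ('g \<Rightarrow> real) \<Rightarrow> ('g \<Rightarrow> real)) \<Rightarrow> 'g \<Rightarrow> ('g \<Rightarrow> real) \<Rightarrow> real" where
  "dstar Gamma i \<gamma> = (\<lambda>x. Pint Gamma i {level Gamma \<gamma>} x \<gamma>)"

definition cstar :: "(nat \<Rightarrow> 'g set) \<Rightarrow> (nat \<Rightarrow> ('g \<Rightarrow> real) \<Rightarrow> ('g \<Rightarrow> real)) \<Rightarrow> 'g \<Rightarrow> ('g \<Rightarrow> real) \<Rightarrow> real" where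
  "cstar Gamma i \<gamma> = (\<lambda>x. ecoord \<gamma> x - dstar Gamma i \<gamma> x)"

definition fspan :: "('v set) \<Rightarrow> (('v \<Rightarrow> real) set) \<Rightarrow> ('v \<Rightarrow> real) set" where
  "fspan X F = {\<phi>. \<exists>S c. finite S \<and> S \<subseteq> F \<and> (\<forall>x\<in>X. \<phi> x = (\<Sum>f\<in>S. c f * f x))}"

definition self_determined :: "(nat \<Rightarrow> 'g set) \<Rightarrow> (nat \<Rightarrow> ('g \<Rightarrow> real) \<Rightarrow> ('g \<Rightarrow> real)) \<Rightarrow> 'g set \<Rightarrow> bool" where
  "self_determined Gamma i G' \<longleftrightarrow> infinite G' \<and> G' \<subseteq> BD_Gamma Gamma \<and>
     (\<forall>\<gamma>\<in>G'. dstar Gamma i \<gamma> \<in> fspan (BD_X Gamma i) (ecoord ` G'))"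

end

theory Submission
  imports Defs
begin

lemma ecoord_inj: "inj ecoord"
proof (rule injI)
  fix a b :: 'g assume "ecoord a = ecoord b"
  then have "ecoord a (unit_vec a) = ecoord b (unit_vec a)" by simp
  then show "a = b" by (simp add: ecoord_def unit_vec_def split: if_splits)
qed

lemma fspan_base: "f \<in> F \<Longrightarrow> f \<in> fspan X F"
  unfolding fspan_def by (rule CollectI, rule exI[of _ "{f}"], rule exI[of _ "\<lambda>_. 1"]) auto

lemma fspan_agree: "\<phi> \<in> fspan X F \<Longrightarrow> (\<forall>x\<in>X. \<psi> x = \<phi> x) \<Longrightarrow> \<psi> \<in> fspan X F"
  unfolding fspan_def by auto

lemma fspan_mono: "F \<subseteq> G \<Longrightarrow> fspan X F \<subseteq> fspan X G"
  unfolding fspan_def by blast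

lemma sum_if_in: "finite U \<Longrightarrow> T \<subseteq> U \<Longrightarrow> (\<Sum>z\<in>U. if z \<in> T then g z else 0) = sum g T"
  by (simp add: sum.inter_restrict[symmetric] Int_absorb1)

lemma fspan_add:
  assumes "\<phi> \<in> fspan X F" "\<psi> \<in> fspan X F"
  shows "(\<lambda>x. a * \<phi> x + b * \<psi> x) \<in> fspan X F"
proof -
  obtain S1 c1 where 1: "finite S1" "S1 \<subseteq> F" "\<forall>x\<in>X. \<phi> x = (\<Sum>f\<in>S1. c1 f * f x)"
    using assms(1) unfolding fspan_def by blast
  obtain S2 c2 where 2: "finite S2" "S2 \<subseteq> F" "\<forall>x\<in>X. \<psi> x = (\<Sum>f\<in>S2. c2 f * f x)"
    using assms(2) unfolding fspan_def by blast
  define c where "c f = a * (if f \<in> S1 then c1 f else 0) + b * (if f \<in> S2 then c2 f else 0)" for f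
  have "\<forall>x\<in>X. a * \<phi> x + b * \<psi> x = (\<Sum>f\<in>S1 \<union> S2. c f * f x)"
  proof
    fix x assume "x \<in> X"
    have e: "c f * f x = a * (if f \<in> S1 then c1 f * f x else 0) + b * (if f \<in> S2 then c2 f * f x else 0)" for f
      by (simp add: c_def distrib_right mult.assoc)
    have "(\<Sum>f\<in>S1 \<union> S2. c f * f x) = a * (\<Sum>f\<in>S1 \<union> S2. if f \<in> S1 then c1 f * f x else 0)
        + b * (\<Sum>f\<in>S1 \<union> S2. if f \<in> S2 then c2 f * f x else 0)"
      by (simp only: e sum.distrib sum_distrib_left)
    also have "\<dots> = a * \<phi> x + b * \<psi> x"
      using 1 2 \<open>x \<in> X\<close> sum_if_in[of "S1 \<union> S2" S1 "\<lambda>f. c1 f * f x"] sum_if_in[of "S1 \<union> S2" S2 "\<lambda>f. c2 f * f x"] by simp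
    finally show "a * \<phi> x + b * \<psi> x = (\<Sum>f\<in>S1 \<union> S2. c f * f x)" by simp
  qed
  then show ?thesis unfolding fspan_def using 1 2 by blast
qed

lemma fspan_zero: "(\<lambda>x. 0) \<in> fspan X F"
  unfolding fspan_def by (rule CollectI, rule exI[of _ "{}"]) auto

lemma fspan_sum:
  assumes "finite T" "\<forall>j\<in>T. \<phi> j \<in> fspan X F"
  shows "(\<lambda>x. \<Sum>j\<in>T. a j * \<phi> j x) \<in> fspan X F"
  using assms
proof (induction T rule: finite_induct)
  case empty then show ?case by (simp add: fspan_zero)
next
  case (insert t T)
  then have "(\<lambda>x. a t * \<phi> t x + 1 * (\<Sum>j\<in>T. a j * \<phi> j x)) \<in> fspan X F"
    by (intro fspan_add) auto
  then show ?case using insert by simp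
qed

lemma fspan_subset:
  assumes "F \<subseteq> fspan X G" shows "fspan X F \<subseteq> fspan X G"
proof
  fix \<phi> assume "\<phi> \<in> fspan X F"
  then obtain S c where S: "finite S" "S \<subseteq> F" "\<forall>x\<in>X. \<phi> x = (\<Sum>f\<in>S. c f * f x)"
    unfolding fspan_def by blast
  have "(\<lambda>x. \<Sum>f\<in>S. c f * f x) \<in> fspan X G"
    using S assms by (intro fspan_sum) auto
  then show "\<phi> \<in> fspan X G" using S(3) by (rule fspan_agree)
qed

lemma fspan_ecoord_E:
  assumes "\<phi> \<in> fspan X (ecoord ` G)"
  shows "\<exists>T k. finite T \<and> T \<subseteq> G \<and> (\<forall>x\<in>X. \<phi> x = (\<Sum>z\<in>T. k z * x z))"
proof -
  obtain S c where S: "finite S" "S \<subseteq> ecoord ` G" "\<forall>x\<in>X. \<phi> x = (\<Sum>f\<in>S. c f * f x)"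
    using assms unfolding fspan_def mem_Collect_eq by (elim exE conjE) (intro that)
  obtain T where T: "T \<subseteq> G" "finite T" "S = ecoord ` T"
    using finite_subset_image[OF S(1) S(2)] by (elim exE conjE) (intro that)
  have "\<forall>x\<in>X. \<phi> x = (\<Sum>z\<in>T. c (ecoord z) * x z)"
  proof
    fix x assume "x \<in> X"
    have "(\<Sum>f\<in>ecoord ` T. c f * f x) = sum ((\<lambda>f. c f * f x) \<circ> ecoord) T"
      proof -
        have "inj_on ecoord T" by (rule inj_on_subset[OF ecoord_inj subset_UNIV])
        then show ?thesis by (rule sum.reindex[where g = "\<lambda>f. c f * f x"])
      qed
    also have "\<dots> = (\<Sum>z\<in>T. c (ecoord z) * ecoord z x)" by (simp only: comp_def)
    finally have "(\<Sum>f\<in>ecoord ` T. c f * f x) = (\<Sum>z\<in>T. c (ecoord z) * ecoord z x)" .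
    moreover have "ecoord z x = x z" for z by (simp add: ecoord_def)
    ultimately show "\<phi> x = (\<Sum>z\<in>T. c (ecoord z) * x z)"
      using S(3) T(3) \<open>x \<in> X\<close> by simp
  qed
  then show ?thesis using T(1,2) by (intro exI conjI)
qed

locale bdsys =
  fixes Gamma :: "nat \<Rightarrow> 'g set" and i :: "nat \<Rightarrow> ('g \<Rightarrow> real) \<Rightarrow> ('g \<Rightarrow> real)"
  assumes BD: "BD_system Gamma i"
begin

abbreviation "GG \<equiv> BD_Gamma Gamma"
abbreviation "lv \<equiv> level Gamma"
abbreviation "dv \<equiv> dvec Gamma i"

lemma fin: "1 \<le> q \<Longrightarrow> finite (Gamma q)"
  using BD unfolding BD_system_def by blast
lemma ssuc: "1 \<le> q \<Longrightarrow> Gamma q \<subseteq> Gamma (Suc q)"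
  using BD unfolding BD_system_def by blast
lemma lin: "1 \<le> q \<Longrightarrow> supp_in (Gamma q) x \<Longrightarrow> supp_in (Gamma q) y \<Longrightarrow>
   i q (\<lambda>\<gamma>. a * x \<gamma> + b * y \<gamma>) = (\<lambda>\<gamma>. a * i q x \<gamma> + b * i q y \<gamma>)"
  using BD unfolding BD_system_def by blast
lemma ext: "1 \<le> q \<Longrightarrow> supp_in (Gamma q) x \<Longrightarrow> \<gamma> \<in> Gamma q \<Longrightarrow> i q x \<gamma> = x \<gamma>"
  using BD unfolding BD_system_def by blast
lemma compat: "1 \<le> p \<Longrightarrow> p < q \<Longrightarrow> supp_in (Gamma p) x \<Longrightarrow> i p x = i q (restr (Gamma q) (i p x))"
  using BD unfolding BD_system_def by blast

lemma mono: assumes "1 \<le> p" "p \<le> q" shows "Gamma p \<subseteq> Gamma q"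
  using assms(2)
proof (induction q rule: dec_induct)
  case base then show ?case by simp
next
  case (step n) then show ?case using ssuc[of n] assms(1) by auto
qed

lemma GG_I: "1 \<le> p \<Longrightarrow> \<gamma> \<in> Gamma p \<Longrightarrow> \<gamma> \<in> GG"
  unfolding BD_Gamma_def by auto

lemma lv: assumes "\<gamma> \<in> GG" shows "1 \<le> lv \<gamma>" "\<gamma> \<in> Gamma (lv \<gamma>)"
proof -
  obtain q where "1 \<le> q" "\<gamma> \<in> Gamma q" using assms unfolding BD_Gamma_def by auto
  then have "1 \<le> lv \<gamma> \<and> \<gamma> \<in> Gamma (lv \<gamma>)"
    unfolding level_def by (rule LeastI[where P = "\<lambda>q. 1 \<le> q \<and> \<gamma> \<in> Gamma q", OF conjI])
  then show "1 \<le> lv \<gamma>" "\<gamma> \<in> Gamma (lv \<gamma>)" by auto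
qed

lemma lv_le: "1 \<le> p \<Longrightarrow> \<gamma> \<in> Gamma p \<Longrightarrow> lv \<gamma> \<le> p"
  unfolding level_def by (rule Least_le) simp

lemma in_iff: "\<gamma> \<in> GG \<Longrightarrow> 1 \<le> p \<Longrightarrow> \<gamma> \<in> Gamma p \<longleftrightarrow> lv \<gamma> \<le> p"
  using lv_le lv mono by blast

lemma i_zero: "1 \<le> q \<Longrightarrow> i q (\<lambda>_. 0) = (\<lambda>_. 0)"
  using lin[of q "\<lambda>_. 0" "\<lambda>_. 0" 0 0] by (simp add: supp_in_def)

lemma supp_unit: "\<nu> \<in> A \<Longrightarrow> supp_in A (unit_vec \<nu>)"
  unfolding supp_in_def unit_vec_def by auto

lemma i_sum:
  assumes "1 \<le> q" "finite T" "T \<subseteq> Gamma q"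
  shows "i q (\<lambda>\<gamma>. \<Sum>\<nu>\<in>T. k \<nu> * unit_vec \<nu> \<gamma>) = (\<lambda>\<gamma>. \<Sum>\<nu>\<in>T. k \<nu> * i q (unit_vec \<nu>) \<gamma>)"
  using assms(2,3)
proof (induction T rule: finite_induct)
  case empty then show ?case using i_zero[OF assms(1)] by simp
next
  case (insert t T)
  have s: "supp_in (Gamma q) (\<lambda>\<gamma>. \<Sum>\<nu>\<in>T. k \<nu> * unit_vec \<nu> \<gamma>)"
    using insert by (auto simp: supp_in_def unit_vec_def intro!: sum.neutral)
  have "i q (\<lambda>\<gamma>. k t * unit_vec t \<gamma> + 1 * (\<Sum>\<nu>\<in>T. k \<nu> * unit_vec \<nu> \<gamma>))
     = (\<lambda>\<gamma>. k t * i q (unit_vec t) \<gamma> + 1 * i q (\<lambda>\<gamma>. \<Sum>\<nu>\<in>T. k \<nu> * unit_vec \<nu> \<gamma>) \<gamma>)"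
    using insert s by (intro lin[OF assms(1)]) (auto intro: supp_unit)
  then show ?case using insert by simp
qed

lemma restr_exp: "finite A \<Longrightarrow> restr A x = (\<lambda>\<gamma>. \<Sum>\<nu>\<in>A. x \<nu> * unit_vec \<nu> \<gamma>)"
  unfolding restr_def unit_vec_def by (auto simp: if_distrib cong: if_cong)

lemma Pinit_formula: "1 \<le> q \<Longrightarrow> Pinit Gamma i q x \<eta> = (\<Sum>\<nu>\<in>Gamma q. x \<nu> * i q (unit_vec \<nu>) \<eta>)"
  unfolding Pinit_def using restr_exp[OF fin, of q x] i_sum[OF _ fin order_refl, of q x] by simp

lemma supp_restr: "supp_in A (restr A x)"
  unfolding supp_in_def restr_def by auto

lemma Pinit_ext: "1 \<le> q \<Longrightarrow> \<eta> \<in> Gamma q \<Longrightarrow> Pinit Gamma i q x \<eta> = x \<eta>"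
  unfolding Pinit_def using ext[OF _ supp_restr] by (simp add: restr_def)

end

context bdsys begin

definition J :: "'g \<Rightarrow> 'g set" where
  "J \<eta> = (if lv \<eta> - 1 = 0 then {} else Gamma (lv \<eta> - 1))"
definition Acoef :: "'g \<Rightarrow> 'g \<Rightarrow> real" where
  "Acoef \<eta> \<nu> = i (lv \<eta> - 1) (unit_vec \<nu>) \<eta>"

lemma J_fin: "finite (J \<eta>)"
  unfolding J_def using fin by auto

lemma J_prop: assumes "\<eta> \<in> GG" "\<nu> \<in> J \<eta>" shows "\<nu> \<in> GG \<and> lv \<nu> < lv \<eta>"
proof -
  have l: "lv \<eta> - 1 \<noteq> 0" and n: "\<nu> \<in> Gamma (lv \<eta> - 1)"
    using assms(2) unfolding J_def by (auto split: if_splits)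
  then have l1: "1 \<le> lv \<eta> - 1" by simp
  have "\<nu> \<in> GG" using GG_I[OF l1 n] .
  moreover have "lv \<nu> \<le> lv \<eta> - 1" using lv_le[OF l1 n] .
  ultimately show ?thesis using l by linarith
qed

lemma J_I: "\<eta> \<in> GG \<Longrightarrow> \<gamma> \<in> GG \<Longrightarrow> lv \<gamma> < lv \<eta> \<Longrightarrow> \<gamma> \<in> J \<eta>"
  unfolding J_def using lv(1)[of \<gamma>] in_iff[of \<gamma> "lv \<eta> - 1"] by auto

lemma dstar_eq: "\<eta> \<in> GG \<Longrightarrow> dstar Gamma i \<eta> x = Pinit Gamma i (lv \<eta>) x \<eta> - Pinit Gamma i (lv \<eta> - 1) x \<eta>"
  unfolding dstar_def Pint_def by simp

lemma cstar_eq: "\<eta> \<in> GG \<Longrightarrow> cstar Gamma i \<eta> x = Pinit Gamma i (lv \<eta> - 1) x \<eta>"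
  unfolding cstar_def using dstar_eq[of \<eta> x] Pinit_ext[OF lv(1) lv(2), of \<eta> x]
  by (simp add: ecoord_def)

lemma cstar_formula: assumes "\<eta> \<in> GG" shows "cstar Gamma i \<eta> x = (\<Sum>\<nu>\<in>J \<eta>. Acoef \<eta> \<nu> * x \<nu>)"
proof (cases "lv \<eta> - 1 = 0")
  case True then show ?thesis using cstar_eq[OF assms] by (simp add: J_def Pinit_def)
next
  case False
  have "Pinit Gamma i (lv \<eta> - 1) x \<eta> = (\<Sum>\<nu>\<in>Gamma (lv \<eta> - 1). x \<nu> * i (lv \<eta> - 1) (unit_vec \<nu>) \<eta>)"
    by (rule Pinit_formula) (use False in simp)
  then show ?thesis using cstar_eq[OF assms] False unfolding J_def Acoef_def by (simp add: mult.commute)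
qed

lemma dstar_formula: "\<eta> \<in> GG \<Longrightarrow> dstar Gamma i \<eta> x = x \<eta> - (\<Sum>\<nu>\<in>J \<eta>. Acoef \<eta> \<nu> * x \<nu>)"
  using cstar_formula[of \<eta> x] unfolding cstar_def ecoord_def by simp

lemma dv_self: "\<gamma> \<in> GG \<Longrightarrow> \<eta> \<in> Gamma (lv \<gamma>) \<Longrightarrow> dv \<gamma> \<eta> = unit_vec \<gamma> \<eta>"
  unfolding dvec_def using ext[OF lv(1) supp_unit[OF lv(2)]] by simp

lemma dv_zero_ge: "\<gamma> \<in> GG \<Longrightarrow> \<eta> \<in> GG \<Longrightarrow> \<gamma> \<noteq> \<eta> \<Longrightarrow> lv \<eta> \<le> lv \<gamma> \<Longrightarrow> dv \<gamma> \<eta> = 0"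
  using dv_self[of \<gamma> \<eta>] in_iff[of \<eta> "lv \<gamma>"] lv(1)[of \<gamma>] by (simp add: unit_vec_def)

lemma dv_diag: "\<gamma> \<in> GG \<Longrightarrow> dv \<gamma> \<gamma> = 1"
  using dv_self[OF _ lv(2)] by (simp add: unit_vec_def)

lemma Pinit_dv: assumes "\<gamma> \<in> GG"
  shows "Pinit Gamma i p (dv \<gamma>) = (if lv \<gamma> \<le> p then dv \<gamma> else (\<lambda>_. 0))"
proof (cases "p = 0")
  case True then show ?thesis using lv(1)[OF assms] by (simp add: Pinit_def)
next
  case False
  then have p: "1 \<le> p" by simp
  have l1: "1 \<le> lv \<gamma>" and lg: "\<gamma> \<in> Gamma (lv \<gamma>)" using lv assms by auto
  consider "lv \<gamma> = p" | "lv \<gamma> < p" | "p < lv \<gamma>" by linarith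
  then show ?thesis
  proof cases
    case 1
    have "restr (Gamma p) (dv \<gamma>) = unit_vec \<gamma>"
      using dv_self[OF assms] 1 lg by (auto simp: restr_def unit_vec_def)
    then show ?thesis using 1 False by (simp add: Pinit_def dvec_def)
  next
    case 2
    then show ?thesis using compat[OF l1 2 supp_unit[OF lg]] False by (simp add: Pinit_def dvec_def)
  next
    case 3
    have "restr (Gamma p) (dv \<gamma>) = (\<lambda>_. 0)"
    proof
      fix \<eta> show "restr (Gamma p) (dv \<gamma>) \<eta> = 0"
      proof (cases "\<eta> \<in> Gamma p")
        case True
        then have "\<eta> \<in> Gamma (lv \<gamma>)" using mono[OF p, of "lv \<gamma>"] 3 by auto
        moreover have "\<gamma> \<notin> Gamma p" using in_iff[OF assms p] 3 by simp
        ultimately show ?thesis using dv_self[OF assms] True by (auto simp: restr_def unit_vec_def)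
      qed (simp add: restr_def)
    qed
    then show ?thesis using 3 False i_zero[OF p] by (simp add: Pinit_def)
  qed
qed

lemma Pint_dv: "\<gamma> \<in> GG \<Longrightarrow> \<exists>k. Pint Gamma i E (dv \<gamma>) \<eta> = k * dv \<gamma> \<eta>"
proof -
  assume g: "\<gamma> \<in> GG"
  show ?thesis
  proof (cases "finite E")
    case True
    have "Pint Gamma i E (dv \<gamma>) \<eta> = (\<Sum>q\<in>E. Pinit Gamma i q (dv \<gamma>) \<eta> - Pinit Gamma i (q - 1) (dv \<gamma>) \<eta>)"
      using True by (simp add: Pint_def)
    also have "\<dots> = (\<Sum>q\<in>E. ((if lv \<gamma> \<le> q then 1 else 0) - (if lv \<gamma> \<le> q - 1 then 1 else 0)) * dv \<gamma> \<eta>)"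
      by (rule sum.cong) (auto simp: Pinit_dv[OF g])
    also have "\<dots> = (\<Sum>q\<in>E. ((if lv \<gamma> \<le> q then 1 else 0) - (if lv \<gamma> \<le> q - 1 then 1 else 0))) * dv \<gamma> \<eta>"
      by (rule sum_distrib_right[symmetric])
    finally show ?thesis by blast
  next
    case False
    then show ?thesis by (auto simp: Pint_def Pinit_dv[OF g] intro: exI[of _ 1] exI[of _ 0])
  qed
qed

lemma dstar_dv: "\<gamma> \<in> GG \<Longrightarrow> \<eta> \<in> GG \<Longrightarrow> \<gamma> \<noteq> \<eta> \<Longrightarrow> dstar Gamma i \<eta> (dv \<gamma>) = 0"
  unfolding dstar_eq Pinit_dv
  using dv_zero_ge[of \<gamma> \<eta>] by auto

lemma cstar_dv_lt: "\<gamma> \<in> GG \<Longrightarrow> \<eta> \<in> GG \<Longrightarrow> lv \<gamma> < lv \<eta> \<Longrightarrow> cstar Gamma i \<eta> (dv \<gamma>) = dv \<gamma> \<eta>"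
  unfolding cstar_def using dstar_dv[of \<gamma> \<eta>] by (auto simp: ecoord_def)

lemma dv_in_X: "\<gamma> \<in> GG \<Longrightarrow> dv \<gamma> \<in> BD_X Gamma i"
  unfolding BD_X_def by (auto intro!: exI[of _ "{\<gamma>}"] exI[of _ "\<lambda>_. 1"])

lemma tri:
  assumes S: "finite S" "S \<subseteq> GG" and h: "\<forall>\<gamma>\<in>S. (\<Sum>z\<in>S. c z * dv \<gamma> z) = 0"
    and z: "z \<in> S"
  shows "c z = 0"
proof (rule ccontr)
  assume nz: "c z \<noteq> 0"
  define T where "T = {z\<in>S. c z \<noteq> 0}"
  have Tf: "finite T" "T \<noteq> {}" using S z nz unfolding T_def by auto
  have "Max (lv ` T) \<in> lv ` T" using Tf by (intro Max_in) auto
  then obtain g where gT: "g \<in> T" and gl: "lv g = Max (lv ` T)" by auto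
  have gmax: "\<forall>y\<in>T. lv y \<le> lv g"
    unfolding gl using Max_ge[OF finite_imageI[OF Tf(1)] imageI] by blast
  have gS: "g \<in> S" "c g \<noteq> 0" using gT unfolding T_def by auto
  have "(\<Sum>y\<in>S. c y * dv g y) = (\<Sum>y\<in>S. if y = g then c g else 0)"
  proof (rule sum.cong)
    fix y assume yS: "y \<in> S"
    show "c y * dv g y = (if y = g then c g else 0)"
    proof (cases "y = g")
      case True then show ?thesis using dv_diag gS S by auto
    next
      case False
      show ?thesis
      proof (cases "c y = 0")
        case False
        then have "y \<in> T" using yS unfolding T_def by auto
        then have "dv g y = 0" using dv_zero_ge[of g y] gmax \<open>y \<noteq> g\<close> S yS gS by auto
        then show ?thesis using \<open>y \<noteq> g\<close> by simp
      qed (use False in simp)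
    qed
  qed simp
  also have "\<dots> = c g" using gS S by simp
  finally show False using h gS by simp
qed

lemma LI:
  assumes "finite S" "S \<subseteq> GG" "\<forall>x\<in>BD_X Gamma i. (\<Sum>z\<in>S. c z * x z) = 0" "z \<in> S"
  shows "c z = 0"
proof (rule tri[where c = c, OF assms(1,2) _ assms(4)], rule ballI)
  fix \<gamma> assume "\<gamma> \<in> S"
  then have "dv \<gamma> \<in> BD_X Gamma i" using assms(2) dv_in_X by auto
  then show "(\<Sum>z\<in>S. c z * dv \<gamma> z) = 0" using assms(3) by blast
qed

end

context bdsys begin

definition AP :: "'g set \<Rightarrow> 'g \<Rightarrow> bool" where
  "AP G' \<eta> \<longleftrightarrow> (\<forall>\<nu>\<in>J \<eta> - G'. Acoef \<eta> \<nu> = 0)"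
definition DP :: "'g set \<Rightarrow> 'g \<Rightarrow> bool" where
  "DP G' \<eta> \<longleftrightarrow> (\<forall>\<gamma>\<in>GG - G'. dv \<gamma> \<eta> = 0)"

lemma L1:
  assumes "\<eta> \<in> G'" "G' \<subseteq> GG" "\<forall>\<eta>'\<in>G'. lv \<eta>' < lv \<eta> \<longrightarrow> DP G' \<eta>'" "AP G' \<eta>"
  shows "DP G' \<eta>"
  unfolding DP_def
proof
  fix \<gamma> assume g: "\<gamma> \<in> GG - G'"
  have e: "\<eta> \<in> GG" using assms by auto
  show "dv \<gamma> \<eta> = 0"
  proof (cases "lv \<eta> \<le> lv \<gamma>")
    case True then show ?thesis using dv_zero_ge[of \<gamma> \<eta>] g e assms(1) by auto
  next
    case False
    then have "dv \<gamma> \<eta> = (\<Sum>\<nu>\<in>J \<eta>. Acoef \<eta> \<nu> * dv \<gamma> \<nu>)"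
      using cstar_dv_lt[of \<gamma> \<eta>] cstar_formula[of \<eta>] g e by auto
    also have "\<dots> = 0"
    proof (rule sum.neutral, rule ballI)
      fix \<nu> assume n: "\<nu> \<in> J \<eta>"
      show "Acoef \<eta> \<nu> * dv \<gamma> \<nu> = 0"
      proof (cases "\<nu> \<in> G'")
        case True
        then have "DP G' \<nu>" using assms(3) J_prop[OF e n] by auto
        then show ?thesis using g unfolding DP_def by auto
      next
        case False then show ?thesis using assms(4) n unfolding AP_def by auto
      qed
    qed
    finally show ?thesis .
  qed
qed

lemma L2:
  assumes "\<eta> \<in> G'" "G' \<subseteq> GG" "\<forall>\<eta>'\<in>G'. lv \<eta>' < lv \<eta> \<longrightarrow> DP G' \<eta>'"
    "\<forall>\<gamma>\<in>J \<eta> - G'. cstar Gamma i \<eta> (dv \<gamma>) = 0"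
  shows "AP G' \<eta>"
  unfolding AP_def
proof
  fix \<nu> assume n: "\<nu> \<in> J \<eta> - G'"
  have e: "\<eta> \<in> GG" using assms by auto
  show "Acoef \<eta> \<nu> = 0"
  proof (rule tri[of "J \<eta> - G'"])
    show "finite (J \<eta> - G')" using J_fin by auto
    show "J \<eta> - G' \<subseteq> GG" using J_prop[OF e] by auto
    show "\<nu> \<in> J \<eta> - G'" by fact
    show "\<forall>\<gamma>\<in>J \<eta> - G'. (\<Sum>z\<in>J \<eta> - G'. Acoef \<eta> z * dv \<gamma> z) = 0"
    proof
      fix \<gamma> assume g: "\<gamma> \<in> J \<eta> - G'"
      have gG: "\<gamma> \<in> GG" using J_prop[OF e] g by auto
      have "(\<Sum>z\<in>J \<eta> - G'. Acoef \<eta> z * dv \<gamma> z) = (\<Sum>z\<in>J \<eta>. Acoef \<eta> z * dv \<gamma> z)"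
      proof (rule sum.mono_neutral_left[OF J_fin], blast, rule ballI)
        fix z assume z: "z \<in> J \<eta> - (J \<eta> - G')"
        then have "DP G' z" using assms(3) J_prop[OF e, of z] by auto
        then show "Acoef \<eta> z * dv \<gamma> z = 0" using g gG unfolding DP_def by auto
      qed
      also have "\<dots> = cstar Gamma i \<eta> (dv \<gamma>)" using cstar_formula[OF e] by simp
      also have "\<dots> = 0" using assms(4) g by auto
      finally show "(\<Sum>z\<in>J \<eta> - G'. Acoef \<eta> z * dv \<gamma> z) = 0" .
    qed
  qed
qed

lemma M:
  assumes "\<eta> \<in> G'" "G' \<subseteq> GG" "G'' \<subseteq> G'" "dstar Gamma i \<eta> \<in> fspan (BD_X Gamma i) (ecoord ` G'')"
  shows "AP G' \<eta>"
  unfolding AP_def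
proof
  fix \<nu> assume n: "\<nu> \<in> J \<eta> - G'"
  have e: "\<eta> \<in> GG" using assms by auto
  obtain T k where T: "finite T" "T \<subseteq> G''" "\<forall>x\<in>BD_X Gamma i. dstar Gamma i \<eta> x = (\<Sum>z\<in>T. k z * x z)"
    using fspan_ecoord_E[OF assms(4)] by blast
  define U where "U = T \<union> {\<eta>} \<union> J \<eta>"
  define m where "m z = (if z \<in> T then k z else 0) - (if z \<in> {\<eta>} then 1 else 0) + (if z \<in> J \<eta> then Acoef \<eta> z else 0)" for z
  have U: "finite U" "U \<subseteq> GG" using T J_fin J_prop[OF e] assms unfolding U_def by auto
  have "m \<nu> = 0"
  proof (rule LI[OF U])
    show "\<nu> \<in> U" using n unfolding U_def by auto
    show "\<forall>x\<in>BD_X Gamma i. (\<Sum>z\<in>U. m z * x z) = 0"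
    proof
      fix x assume x: "x \<in> BD_X Gamma i"
      have "m z * x z = (if z \<in> T then k z * x z else 0) - (if z \<in> {\<eta>} then x z else 0) + (if z \<in> J \<eta> then Acoef \<eta> z * x z else 0)" for z
        unfolding m_def by (simp add: algebra_simps)
      then have "(\<Sum>z\<in>U. m z * x z) = (\<Sum>z\<in>U. if z \<in> T then k z * x z else 0) - (\<Sum>z\<in>U. if z \<in> {\<eta>} then x z else 0) + (\<Sum>z\<in>U. if z \<in> J \<eta> then Acoef \<eta> z * x z else 0)"
        by (simp add: sum.distrib sum_subtractf)
      also have "\<dots> = (\<Sum>z\<in>T. k z * x z) - x \<eta> + (\<Sum>z\<in>J \<eta>. Acoef \<eta> z * x z)"
        using U(1) by (subst (1 2 3) sum_if_in) (auto simp: U_def)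
      also have "\<dots> = 0" using T(3) x dstar_formula[OF e, of x] by simp
      finally show "(\<Sum>z\<in>U. m z * x z) = 0" .
    qed
  qed
  moreover have "\<nu> \<notin> T" "\<nu> \<noteq> \<eta>" using n T(2) assms(1,3) by auto
  ultimately show "Acoef \<eta> \<nu> = 0" using n unfolding m_def by simp
qed

end

context bdsys begin

lemma AA_DD:
  assumes "G' \<subseteq> GG" "\<forall>\<eta>\<in>G'. AP G' \<eta>" shows "\<forall>\<eta>\<in>G'. DP G' \<eta>"
proof -
  have "\<forall>\<eta>\<in>G'. lv \<eta> = n \<longrightarrow> DP G' \<eta>" for n
  proof (induction n rule: less_induct)
    case (less n)
    show ?case using L1[OF _ assms(1)] less assms(2) by blast
  qed
  then show ?thesis by blast
qed

lemma DD_AA: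
  assumes "G' \<subseteq> GG" "\<forall>\<eta>\<in>G'. DP G' \<eta>" shows "\<forall>\<eta>\<in>G'. AP G' \<eta>"
proof
  fix \<eta> assume e: "\<eta> \<in> G'"
  then have eG: "\<eta> \<in> GG" using assms by auto
  show "AP G' \<eta>"
  proof (rule L2[OF e assms(1)])
    show "\<forall>\<eta>'\<in>G'. lv \<eta>' < lv \<eta> \<longrightarrow> DP G' \<eta>'" using assms by auto
    show "\<forall>\<gamma>\<in>J \<eta> - G'. cstar Gamma i \<eta> (dv \<gamma>) = 0"
    proof
      fix \<gamma> assume g: "\<gamma> \<in> J \<eta> - G'"
      then have "\<gamma> \<in> GG" "lv \<gamma> < lv \<eta>" using J_prop[OF eG] by auto
      then have "cstar Gamma i \<eta> (dv \<gamma>) = dv \<gamma> \<eta>" using cstar_dv_lt eG by auto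
      then show "cstar Gamma i \<eta> (dv \<gamma>) = 0" using assms(2) e g \<open>\<gamma> \<in> GG\<close> unfolding DP_def by auto
    qed
  qed
qed

lemma J_sub: "\<eta> \<in> GG \<Longrightarrow> 1 \<le> q \<Longrightarrow> \<eta> \<in> Gamma q \<Longrightarrow> J \<eta> \<subseteq> Gamma q"
proof
  fix \<nu> assume "\<eta> \<in> GG" "1 \<le> q" "\<eta> \<in> Gamma q" "\<nu> \<in> J \<eta>"
  then show "\<nu> \<in> Gamma q" using J_prop[of \<eta> \<nu>] in_iff[of \<nu> q] in_iff[of \<eta> q] by auto
qed

lemma sumJ: "AP G' \<eta> \<Longrightarrow> (\<Sum>\<nu>\<in>J \<eta>. Acoef \<eta> \<nu> * x \<nu>) = (\<Sum>\<nu>\<in>J \<eta> \<inter> G'. Acoef \<eta> \<nu> * x \<nu>)"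
  unfolding AP_def by (rule sum.mono_neutral_right[OF J_fin]) auto

lemma AA_b:
  assumes "G' \<subseteq> GG" "\<forall>\<eta>\<in>G'. AP G' \<eta>" "1 \<le> q"
  shows "fspan X (dstar Gamma i ` (G' \<inter> Gamma q)) = fspan X (ecoord ` (G' \<inter> Gamma q))"
proof
  have key: "dstar Gamma i \<eta> = (\<lambda>x. 1 * ecoord \<eta> x + (-1) * (\<Sum>\<nu>\<in>J \<eta> \<inter> G'. Acoef \<eta> \<nu> * ecoord \<nu> x))"
    if "\<eta> \<in> G'" for \<eta>
    using that assms dstar_formula[of \<eta>] sumJ[of G' \<eta>] by (auto simp: ecoord_def)
  have Jsub: "J \<eta> \<inter> G' \<subseteq> G' \<inter> Gamma q" if "\<eta> \<in> G' \<inter> Gamma q" for \<eta>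
    using J_sub[of \<eta> q] that assms by auto
  show "fspan X (dstar Gamma i ` (G' \<inter> Gamma q)) \<subseteq> fspan X (ecoord ` (G' \<inter> Gamma q))"
  proof (rule fspan_subset, rule subsetI)
    fix f assume "f \<in> dstar Gamma i ` (G' \<inter> Gamma q)"
    then obtain \<eta> where e: "\<eta> \<in> G' \<inter> Gamma q" "f = dstar Gamma i \<eta>" by auto
    have "(\<lambda>x. 1 * ecoord \<eta> x + (-1) * (\<Sum>\<nu>\<in>J \<eta> \<inter> G'. Acoef \<eta> \<nu> * ecoord \<nu> x)) \<in> fspan X (ecoord ` (G' \<inter> Gamma q))"
    proof (rule fspan_add)
      show "ecoord \<eta> \<in> fspan X (ecoord ` (G' \<inter> Gamma q))" using e by (intro fspan_base) auto
      show "(\<lambda>x. \<Sum>\<nu>\<in>J \<eta> \<inter> G'. Acoef \<eta> \<nu> * ecoord \<nu> x) \<in> fspan X (ecoord ` (G' \<inter> Gamma q))"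
        using Jsub[OF e(1)] J_fin by (intro fspan_sum) (auto intro: fspan_base)
    qed
    then show "f \<in> fspan X (ecoord ` (G' \<inter> Gamma q))" using key e by auto
  qed
  have "\<forall>\<eta>\<in>G' \<inter> Gamma q. lv \<eta> = n \<longrightarrow> ecoord \<eta> \<in> fspan X (dstar Gamma i ` (G' \<inter> Gamma q))" for n
  proof (induction n rule: less_induct)
    case (less n)
    show ?case
    proof (intro ballI impI)
      fix \<eta> assume e: "\<eta> \<in> G' \<inter> Gamma q" and l: "lv \<eta> = n"
      have eG: "\<eta> \<in> GG" using e assms by auto
      have "ecoord \<eta> = (\<lambda>x. 1 * dstar Gamma i \<eta> x + 1 * (\<Sum>\<nu>\<in>J \<eta> \<inter> G'. Acoef \<eta> \<nu> * ecoord \<nu> x))"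
        using key[of \<eta>] e by auto
      also have "\<dots> \<in> fspan X (dstar Gamma i ` (G' \<inter> Gamma q))"
      proof (rule fspan_add)
        show "dstar Gamma i \<eta> \<in> fspan X (dstar Gamma i ` (G' \<inter> Gamma q))" using e by (intro fspan_base) auto
        have "\<forall>j\<in>J \<eta> \<inter> G'. ecoord j \<in> fspan X (dstar Gamma i ` (G' \<inter> Gamma q))"
          using less.IH J_prop[OF eG] Jsub[OF e] l by blast
        then show "(\<lambda>x. \<Sum>\<nu>\<in>J \<eta> \<inter> G'. Acoef \<eta> \<nu> * ecoord \<nu> x) \<in> fspan X (dstar Gamma i ` (G' \<inter> Gamma q))"
          using J_fin by (intro fspan_sum) auto
      qed
      finally show "ecoord \<eta> \<in> fspan X (dstar Gamma i ` (G' \<inter> Gamma q))" .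
    qed
  qed
  then show "fspan X (ecoord ` (G' \<inter> Gamma q)) \<subseteq> fspan X (dstar Gamma i ` (G' \<inter> Gamma q))"
    by (intro fspan_subset) blast
qed

lemma Pint_all: "Pint Gamma i {1..} x = x"
proof -
  have "Inf {1::nat..} = 1" by (simp add: cInf_atLeast)
  then show ?thesis using infinite_Ici[where a = "1::nat"] by (simp add: Pint_def Pinit_def)
qed

lemma nat_interval_all: "nat_interval {1..}"
  unfolding nat_interval_def by auto

end

context bdsys begin

lemma main:
  assumes inf: "infinite G'" and sub: "G' \<subseteq> GG"
  defines "q0 \<equiv> (LEAST q. 1 \<le> q \<and> G' \<inter> Gamma q \<noteq> {})"
    and "X \<equiv> BD_X Gamma i"
  shows
   "(self_determined Gamma i G'
     \<longleftrightarrow> (\<forall>q\<ge>q0. fspan X (dstar Gamma i ` (G' \<inter> Gamma q)) = fspan X (ecoord ` (G' \<inter> Gamma q))))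
  \<and> ((\<forall>q\<ge>q0. fspan X (dstar Gamma i ` (G' \<inter> Gamma q)) = fspan X (ecoord ` (G' \<inter> Gamma q)))
     \<longleftrightarrow> (fspan X (dstar Gamma i ` (G' \<inter> Gamma q0)) = fspan X (ecoord ` (G' \<inter> Gamma q0))
          \<and> (\<forall>q\<ge>q0. fspan X (cstar Gamma i ` (G' \<inter> Delta Gamma (Suc q)))
                \<subseteq> fspan X {(\<lambda>x. ecoord \<gamma> (Pint Gamma i E x)) | \<gamma> E. \<gamma> \<in> G' \<inter> Gamma q \<and> nat_interval E})))
  \<and> ((fspan X (dstar Gamma i ` (G' \<inter> Gamma q0)) = fspan X (ecoord ` (G' \<inter> Gamma q0))
          \<and> (\<forall>q\<ge>q0. fspan X (cstar Gamma i ` (G' \<inter> Delta Gamma (Suc q)))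
                \<subseteq> fspan X {(\<lambda>x. ecoord \<gamma> (Pint Gamma i E x)) | \<gamma> E. \<gamma> \<in> G' \<inter> Gamma q \<and> nat_interval E}))
     \<longleftrightarrow> (\<forall>\<gamma>\<in>BD_Gamma Gamma - G'. \<forall>\<eta>\<in>G'. ecoord \<eta> (dvec Gamma i \<gamma>) = 0))
  \<and> ((\<forall>\<gamma>\<in>BD_Gamma Gamma - G'. \<forall>\<eta>\<in>G'. ecoord \<eta> (dvec Gamma i \<gamma>) = 0)
     \<longleftrightarrow> (\<forall>\<gamma>\<in>BD_Gamma Gamma - G'. \<forall>\<eta>\<in>G'. cstar Gamma i \<eta> (dvec Gamma i \<gamma>) = 0))"
proof -
  let ?pa = "self_determined Gamma i G'"
  let ?pb = "\<forall>q\<ge>q0. fspan X (dstar Gamma i ` (G' \<inter> Gamma q)) = fspan X (ecoord ` (G' \<inter> Gamma q))"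
  let ?pc1 = "fspan X (dstar Gamma i ` (G' \<inter> Gamma q0)) = fspan X (ecoord ` (G' \<inter> Gamma q0))"
  let ?pc2 = "\<forall>q\<ge>q0. fspan X (cstar Gamma i ` (G' \<inter> Delta Gamma (Suc q)))
                \<subseteq> fspan X {(\<lambda>x. ecoord \<gamma> (Pint Gamma i E x)) | \<gamma> E. \<gamma> \<in> G' \<inter> Gamma q \<and> nat_interval E}"
  let ?pd = "\<forall>\<gamma>\<in>BD_Gamma Gamma - G'. \<forall>\<eta>\<in>G'. ecoord \<eta> (dvec Gamma i \<gamma>) = 0"
  let ?pe = "\<forall>\<gamma>\<in>BD_Gamma Gamma - G'. \<forall>\<eta>\<in>G'. cstar Gamma i \<eta> (dvec Gamma i \<gamma>) = 0"
  let ?AA = "\<forall>\<eta>\<in>G'. AP G' \<eta>"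
  let ?DD = "\<forall>\<eta>\<in>G'. DP G' \<eta>"
  obtain \<eta>0 where e0: "\<eta>0 \<in> G'" using inf by (metis finite.emptyI ex_in_conv)
  have "1 \<le> lv \<eta>0 \<and> G' \<inter> Gamma (lv \<eta>0) \<noteq> {}" using lv[of \<eta>0] e0 sub by auto
  then have q0: "1 \<le> q0" "G' \<inter> Gamma q0 \<noteq> {}" unfolding q0_def by (metis (mono_tags, lifting) LeastI)+
  have q0le: "q0 \<le> lv \<eta>" if "\<eta> \<in> G'" for \<eta>
    unfolding q0_def using lv[of \<eta>] that sub by (intro Least_le) auto
  have DDd: "?DD \<longleftrightarrow> ?pd" unfolding DP_def ecoord_def by blast
  have de: "?pd \<longleftrightarrow> ?pe"
  proof -
    have "cstar Gamma i \<eta> (dv \<gamma>) = ecoord \<eta> (dv \<gamma>)" if "\<gamma> \<in> GG - G'" "\<eta> \<in> G'" for \<gamma> \<eta>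
      using dstar_dv[of \<gamma> \<eta>] that sub unfolding cstar_def by auto
    then show ?thesis by auto
  qed
  have AAD: "?AA \<longleftrightarrow> ?DD" using AA_DD[OF sub] DD_AA[OF sub] by blast
  have aA: "?pa \<Longrightarrow> ?AA"
    unfolding self_determined_def X_def using M[OF _ sub order_refl] by blast
  have Ab: "?AA \<Longrightarrow> ?pb" using AA_b[OF sub] q0(1) by auto
  have ba: "?pb \<Longrightarrow> ?pa"
  proof -
    assume pb: ?pb
    have "dstar Gamma i \<gamma> \<in> fspan (BD_X Gamma i) (ecoord ` G')" if g: "\<gamma> \<in> G'" for \<gamma>
    proof -
      let ?q = "max q0 (lv \<gamma>)"
      have "\<gamma> \<in> Gamma ?q" using lv[of \<gamma>] mono[of "lv \<gamma>" ?q] g sub by auto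
      then have "dstar Gamma i \<gamma> \<in> fspan X (dstar Gamma i ` (G' \<inter> Gamma ?q))"
        using g by (intro fspan_base) auto
      also have "\<dots> = fspan X (ecoord ` (G' \<inter> Gamma ?q))" using pb by auto
      also have "\<dots> \<subseteq> fspan X (ecoord ` G')" by (intro fspan_mono) auto
      finally show ?thesis unfolding X_def .
    qed
    then show ?pa unfolding self_determined_def using inf sub by blast
  qed
  have Ac: "?AA \<Longrightarrow> ?pc1 \<and> ?pc2"
  proof
    assume AA: ?AA
    show ?pc1 using Ab[OF AA] by auto
    show ?pc2
    proof (intro allI impI fspan_subset subsetI)
      fix q f assume q: "q0 \<le> q" and f: "f \<in> cstar Gamma i ` (G' \<inter> Delta Gamma (Suc q))"
      have q1: "1 \<le> q" using q q0 by auto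
      obtain \<eta> where e: "\<eta> \<in> G'" "\<eta> \<in> Gamma (Suc q)" "\<eta> \<notin> Gamma q" "f = cstar Gamma i \<eta>"
        using f q1 by (auto simp: Delta_def)
      have eG: "\<eta> \<in> GG" using e sub by auto
      have "lv \<eta> = Suc q" using lv_le[of "Suc q" \<eta>] in_iff[OF eG q1] e by auto
      then have J: "J \<eta> = Gamma q" using q1 unfolding J_def by auto
      have f1: "f = (\<lambda>x. \<Sum>\<nu>\<in>J \<eta> \<inter> G'. Acoef \<eta> \<nu> * x \<nu>)"
        using e cstar_formula[OF eG] sumJ[of G' \<eta>] AA by auto
      have f2: "(\<lambda>x. \<Sum>\<nu>\<in>J \<eta> \<inter> G'. Acoef \<eta> \<nu> * (\<lambda>x. ecoord \<nu> (Pint Gamma i {1..} x)) x) = (\<lambda>x. \<Sum>\<nu>\<in>J \<eta> \<inter> G'. Acoef \<eta> \<nu> * x \<nu>)"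
        by (simp only: Pint_all ecoord_def)
      have "f = (\<lambda>x. \<Sum>\<nu>\<in>J \<eta> \<inter> G'. Acoef \<eta> \<nu> * (\<lambda>x. ecoord \<nu> (Pint Gamma i {1..} x)) x)"
        using f1 f2 by simp
      also have "\<dots> \<in> fspan X {(\<lambda>x. ecoord \<gamma> (Pint Gamma i E x)) | \<gamma> E. \<gamma> \<in> G' \<inter> Gamma q \<and> nat_interval E}"
      proof (rule fspan_sum)
        show "finite (J \<eta> \<inter> G')" using J_fin by auto
        show "\<forall>j\<in>J \<eta> \<inter> G'. (\<lambda>x. ecoord j (Pint Gamma i {1..} x)) \<in> fspan X {(\<lambda>x. ecoord \<gamma> (Pint Gamma i E x)) | \<gamma> E. \<gamma> \<in> G' \<inter> Gamma q \<and> nat_interval E}"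
        proof
          fix j assume "j \<in> J \<eta> \<inter> G'"
          then have "(\<lambda>x. ecoord j (Pint Gamma i {1..} x)) \<in> {(\<lambda>x. ecoord \<gamma> (Pint Gamma i E x)) | \<gamma> E. \<gamma> \<in> G' \<inter> Gamma q \<and> nat_interval E}"
            using J nat_interval_all by blast
          then show "(\<lambda>x. ecoord j (Pint Gamma i {1..} x)) \<in> fspan X {(\<lambda>x. ecoord \<gamma> (Pint Gamma i E x)) | \<gamma> E. \<gamma> \<in> G' \<inter> Gamma q \<and> nat_interval E}"
            by (rule fspan_base)
        qed
      qed
      finally show "f \<in> fspan X {(\<lambda>x. ecoord \<gamma> (Pint Gamma i E x)) | \<gamma> E. \<gamma> \<in> G' \<inter> Gamma q \<and> nat_interval E}" .
    qed
  qed
  have cD: "?pc1 \<and> ?pc2 \<Longrightarrow> ?DD"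
  proof -
    assume pc: "?pc1 \<and> ?pc2"
    have "\<forall>\<eta>\<in>G'. lv \<eta> = n \<longrightarrow> DP G' \<eta>" for n
    proof (induction n rule: less_induct)
      case (less n)
      show ?case
      proof (intro ballI impI)
        fix \<eta> assume e: "\<eta> \<in> G'" and l: "lv \<eta> = n"
        have eG: "\<eta> \<in> GG" using e sub by auto
        have IH: "\<forall>\<eta>'\<in>G'. lv \<eta>' < lv \<eta> \<longrightarrow> DP G' \<eta>'" using less l by blast
        have "AP G' \<eta>"
        proof (cases "lv \<eta> = q0")
          case True
          have "\<eta> \<in> Gamma q0" using True lv eG by auto
          then have "dstar Gamma i \<eta> \<in> fspan X (dstar Gamma i ` (G' \<inter> Gamma q0))"
            using e by (intro fspan_base) auto
          then have "dstar Gamma i \<eta> \<in> fspan X (ecoord ` (G' \<inter> Gamma q0))" using pc by simp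
          then show ?thesis using M[OF e sub, of "G' \<inter> Gamma q0"] unfolding X_def by auto
        next
          case False
          then obtain q where lq: "lv \<eta> = Suc q" and q: "q0 \<le> q" using q0le[OF e]
            by (metis Suc_le_D le_antisym not_less_eq_eq)
          have q1: "1 \<le> q" using q q0 by auto
          have "\<eta> \<in> Gamma (Suc q)" "\<eta> \<notin> Gamma q" using lv[OF eG] lq in_iff[OF eG q1] by auto
          then have "\<eta> \<in> G' \<inter> Delta Gamma (Suc q)" using e q1 by (auto simp: Delta_def)
          then have "cstar Gamma i \<eta> \<in> fspan X (cstar Gamma i ` (G' \<inter> Delta Gamma (Suc q)))"
            by (intro fspan_base) auto
          then have "cstar Gamma i \<eta> \<in> fspan X {(\<lambda>x. ecoord \<gamma> (Pint Gamma i E x)) | \<gamma> E. \<gamma> \<in> G' \<inter> Gamma q \<and> nat_interval E}"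
            using pc q by blast
          then obtain S c where S: "finite S" "S \<subseteq> {(\<lambda>x. ecoord \<gamma> (Pint Gamma i E x)) | \<gamma> E. \<gamma> \<in> G' \<inter> Gamma q \<and> nat_interval E}"
            "\<forall>x\<in>X. cstar Gamma i \<eta> x = (\<Sum>f\<in>S. c f * f x)"
            unfolding fspan_def by blast
          show ?thesis
          proof (rule L2[OF e sub IH], rule ballI)
            fix \<gamma> assume g: "\<gamma> \<in> J \<eta> - G'"
            have gG: "\<gamma> \<in> GG" using J_prop[OF eG] g by auto
            have "cstar Gamma i \<eta> (dv \<gamma>) = (\<Sum>f\<in>S. c f * f (dv \<gamma>))"
              using S(3) dv_in_X[OF gG] unfolding X_def by auto
            also have "\<dots> = 0"
            proof (rule sum.neutral, rule ballI)
              fix f assume "f \<in> S"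
              then obtain \<zeta> E where z: "\<zeta> \<in> G'" "\<zeta> \<in> Gamma q" "f = (\<lambda>x. ecoord \<zeta> (Pint Gamma i E x))"
                using S(2) by blast
              obtain k where k: "Pint Gamma i E (dv \<gamma>) \<zeta> = k * dv \<gamma> \<zeta>" using Pint_dv[OF gG] by blast
              have "lv \<zeta> < lv \<eta>" using z lq lv_le[OF q1] by fastforce
              then have "DP G' \<zeta>" using IH z by auto
              then have "dv \<gamma> \<zeta> = 0" using g gG unfolding DP_def by auto
              then show "c f * f (dv \<gamma>) = 0" using z k by (simp add: ecoord_def)
            qed
            finally show "cstar Gamma i \<eta> (dv \<gamma>) = 0" .
          qed
        qed
        then show "DP G' \<eta>" using L1[OF e sub IH] by blast
      qed
    qed
    then show ?DD by blast
  qed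
  show ?thesis using aA Ab ba Ac cD AAD DDd de by blast
qed

end

theorem proposition1p5:
  fixes Gamma :: "nat \<Rightarrow> 'g set" and i :: "nat \<Rightarrow> ('g \<Rightarrow> real) \<Rightarrow> ('g \<Rightarrow> real)"
    and G' :: "'g set"
  assumes BD: "BD_system Gamma i"
    and inf: "infinite G'" and sub: "G' \<subseteq> BD_Gamma Gamma"
  defines "q0 \<equiv> (LEAST q. 1 \<le> q \<and> G' \<inter> Gamma q \<noteq> {})"
    and "X \<equiv> BD_X Gamma i"
  shows
   "(self_determined Gamma i G'
     \<longleftrightarrow> (\<forall>q\<ge>q0. fspan X (dstar Gamma i ` (G' \<inter> Gamma q)) = fspan X (ecoord ` (G' \<inter> Gamma q))))
  \<and> ((\<forall>q\<ge>q0. fspan X (dstar Gamma i ` (G' \<inter> Gamma q)) = fspan X (ecoord ` (G' \<inter> Gamma q)))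
     \<longleftrightarrow> (fspan X (dstar Gamma i ` (G' \<inter> Gamma q0)) = fspan X (ecoord ` (G' \<inter> Gamma q0))
          \<and> (\<forall>q\<ge>q0. fspan X (cstar Gamma i ` (G' \<inter> Delta Gamma (Suc q)))
                \<subseteq> fspan X {(\<lambda>x. ecoord \<gamma> (Pint Gamma i E x)) | \<gamma> E. \<gamma> \<in> G' \<inter> Gamma q \<and> nat_interval E})))
  \<and> ((fspan X (dstar Gamma i ` (G' \<inter> Gamma q0)) = fspan X (ecoord ` (G' \<inter> Gamma q0))
          \<and> (\<forall>q\<ge>q0. fspan X (cstar Gamma i ` (G' \<inter> Delta Gamma (Suc q)))
                \<subseteq> fspan X {(\<lambda>x. ecoord \<gamma> (Pint Gamma i E x)) | \<gamma> E. \<gamma> \<in> G' \<inter> Gamma q \<and> nat_interval E}))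
     \<longleftrightarrow> (\<forall>\<gamma>\<in>BD_Gamma Gamma - G'. \<forall>\<eta>\<in>G'. ecoord \<eta> (dvec Gamma i \<gamma>) = 0))
  \<and> ((\<forall>\<gamma>\<in>BD_Gamma Gamma - G'. \<forall>\<eta>\<in>G'. ecoord \<eta> (dvec Gamma i \<gamma>) = 0)
     \<longleftrightarrow> (\<forall>\<gamma>\<in>BD_Gamma Gamma - G'. \<forall>\<eta>\<in>G'. cstar Gamma i \<eta> (dvec Gamma i \<gamma>) = 0))"
  proof -
  interpret bdsys Gamma i by unfold_locales (rule BD)
  show ?thesis unfolding X_def q0_def by (rule main[OF inf sub])
qed

end
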